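(* Every triangle-free unit disk graph has a proper vertex coloring with at most $4$ colors.
   Context: A graph $G$ is a unit disk graph if its vertices can be put in one-to-one correspondence with closed disks of radius $1$ in the plane so that two vertices are adjacent if and only if the corresponding disks intersect (tangent disks are considered to intersect). A graph is triangle-free if it has no subgraph isomorphic to $K_3$. *)

theory Defs
  imports "HOL-Analysis.Analysis"
begin

definition simple_graph :: "'a set \<Rightarrow> ('a \<Rightarrow> 'a \<Rightarrow> bool) \<Rightarrow> bool" where
  "simple_graph V E \<longleftrightarrow>
     (\<forall>u v. E u v \<longrightarrow> u \<in> V \<and> v \<in> V) \<and>
     (\<forall>u. \<not> E u u) \<and> (\<forall>u v. E u v \<longrightarrow> E v u)"

definition unit_disk :: "real^2 \<Rightarrow> (real^2) set" where
  "unit_disk c = cball c 1"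

definition unit_disk_graph :: "'a set \<Rightarrow> ('a \<Rightarrow> 'a \<Rightarrow> bool) \<Rightarrow> bool" where
  "unit_disk_graph V E \<longleftrightarrow>
     (\<exists>c :: 'a \<Rightarrow> real^2. inj_on c V \<and>
        (\<forall>u\<in>V. \<forall>v\<in>V. u \<noteq> v \<longrightarrow>
           (E u v \<longleftrightarrow> unit_disk (c u) \<inter> unit_disk (c v) \<noteq> {})))"

definition triangle_free :: "'a set \<Rightarrow> ('a \<Rightarrow> 'a \<Rightarrow> bool) \<Rightarrow> bool" where
  "triangle_free V E \<longleftrightarrow>
     \<not> (\<exists>u\<in>V. \<exists>v\<in>V. \<exists>w\<in>V. E u v \<and> E v w \<and> E u w)"

definition proper_coloring ::
    "'a set \<Rightarrow> ('a \<Rightarrow> 'a \<Rightarrow> bool) \<Rightarrow> ('a \<Rightarrow> nat) \<Rightarrow> bool" where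
  "proper_coloring V E f \<longleftrightarrow> (\<forall>u\<in>V. \<forall>v\<in>V. E u v \<longrightarrow> f u \<noteq> f v)"

end

theory Submission imports Defs begin

lemma norm2: "(norm (p::real^2))^2 = (p$1)^2 + (p$2)^2"
  by (simp add: norm_vec_def L2_set_def sum_2)

lemma dist2: "dist (p::real^2) q = sqrt ((p$1 - q$1)^2 + (p$2 - q$2)^2)"
  by (simp add: dist_vec_def L2_set_def sum_2 dist_real_def)

lemma core:
  fixes a b al be :: real
  assumes "0 < a" "a \<le> 2" "0 < b" "b \<le> 2" "\<bar>al - be\<bar> \<le> pi/3"
  shows "(a * cos al - b * cos be)^2 + (a * sin al - b * sin be)^2 \<le> 4"
proof -
  have c: "cos (al - be) \<ge> 1/2"
  proof -
    have "cos (al - be) = cos \<bar>al - be\<bar>" by simp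
    also have "\<dots> \<ge> cos (pi/3)" using assms(5) by (intro cos_monotone_0_pi_le) auto
    finally show ?thesis by (simp add: cos_60)
  qed
  have "(a * cos al - b * cos be)^2 + (a * sin al - b * sin be)^2
      = a^2 * ((sin al)^2 + (cos al)^2) + b^2 * ((sin be)^2 + (cos be)^2) - 2*a*b*(cos al * cos be + sin al * sin be)"
    by algebra
  also have "\<dots> = a^2 + b^2 - 2*a*b*cos (al - be)" by (simp add: cos_diff)
  also have "\<dots> \<le> a^2 + b^2 - a*b" using c assms by (simp add: mult_left_mono[of "1/2" _ "2*a*b", simplified])
  also have "\<dots> \<le> 4"
  proof (cases "a \<le> b")
    case True
    then have "a*a \<le> a*b" using assms by (simp add: mult_left_mono)
    moreover have "b*b \<le> 2*2" using assms by (intro mult_mono) auto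
    ultimately show ?thesis by (simp add: power2_eq_square)
  next
    case False
    then have "b*b \<le> a*b" using assms by (simp add: mult_right_mono)
    moreover have "a*a \<le> 2*2" using assms by (intro mult_mono) auto
    ultimately show ?thesis by (simp add: power2_eq_square)
  qed
  finally show ?thesis .
qed

definition ang :: "real^2 \<Rightarrow> real" where "ang p = arcsin (p$2 / norm p)"

definition bucket :: "real^2 \<Rightarrow> nat" where
  "bucket p = (if ang p \<le> - pi/6 then 0 else if ang p \<le> pi/6 then 1 else 2)"

lemma polar:
  fixes p :: "real^2"
  assumes "p$1 \<ge> 0" "p \<noteq> 0"
  shows "p$1 = norm p * cos (ang p)" "p$2 = norm p * sin (ang p)"
    "- (pi/2) \<le> ang p" "ang p \<le> pi/2"
proof -
  have n: "norm p > 0" using assms by simp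
  have le: "\<bar>p$2\<bar> \<le> norm p" using component_le_norm_cart[of p 2] by simp
  then have b: "-1 \<le> p$2 / norm p" "p$2 / norm p \<le> 1" using n by (auto simp: field_simps abs_le_iff)
  show "p$2 = norm p * sin (ang p)" using b n by (simp add: ang_def)
  show "- (pi/2) \<le> ang p" "ang p \<le> pi/2" using arcsin_bounded[OF b] by (auto simp: ang_def)
  have "cos (ang p) = sqrt (1 - (p$2 / norm p)^2)" using cos_arcsin[OF b] by (simp add: ang_def)
  also have "1 - (p$2 / norm p)^2 = (p$1 / norm p)^2"
  proof -
    have "(p$1 / norm p)^2 + (p$2/norm p)^2 = ((p$1)^2 + (p$2)^2) / (norm p)^2"
      by (simp add: power_divide add_divide_distrib)
    also have "\<dots> = 1" using n by (simp add: norm2[symmetric])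
    finally show ?thesis by simp
  qed
  also have "sqrt ((p$1 / norm p)^2) = p$1 / norm p" using assms n by simp
  finally show "p$1 = norm p * cos (ang p)" using n by simp
qed

lemma key:
  fixes p q :: "real^2"
  assumes "p$1 \<ge> 0" "q$1 \<ge> 0" "p \<noteq> 0" "q \<noteq> 0" "norm p \<le> 2" "norm q \<le> 2"
    "bucket p = bucket q"
  shows "dist p q \<le> 2"
proof -
  note P = polar[OF assms(1,3)] and Q = polar[OF assms(2,4)]
  have "\<bar>ang p - ang q\<bar> \<le> pi/3"
    using assms(7) P(3,4) Q(3,4) unfolding bucket_def abs_le_iff by (auto split: if_splits)
  then have "(norm p * cos (ang p) - norm q * cos (ang q))^2 + (norm p * sin (ang p) - norm q * sin (ang q))^2 \<le> 4"
    using assms by (intro core) auto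
  then have "(p$1 - q$1)^2 + (p$2 - q$2)^2 \<le> 2^2" using P Q by simp
  then have "sqrt ((p$1 - q$1)^2 + (p$2 - q$2)^2) \<le> sqrt (2^2)" by (rule real_sqrt_le_mono)
  then show ?thesis unfolding dist2 by simp
qed

lemma disk_iff: "unit_disk a \<inter> unit_disk b \<noteq> {} \<longleftrightarrow> dist a b \<le> 2"
proof
  assume "unit_disk a \<inter> unit_disk b \<noteq> {}"
  then obtain x where "dist a x \<le> 1" "dist b x \<le> 1" by (auto simp: unit_disk_def)
  then show "dist a b \<le> 2" using dist_triangle[of a b x] by (simp add: dist_commute)
next
  assume "dist a b \<le> 2"
  then have "midpoint a b \<in> unit_disk a \<inter> unit_disk b"
    by (simp add: unit_disk_def dist_midpoint)
  then show "unit_disk a \<inter> unit_disk b \<noteq> {}" by blast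
qed

lemma color:
  fixes V :: "'a set" and E :: "'a \<Rightarrow> 'a \<Rightarrow> bool" and c :: "'a \<Rightarrow> real^2"
  assumes fin: "finite V" and inj: "inj_on c V"
    and adj: "\<forall>u\<in>V. \<forall>v\<in>V. u \<noteq> v \<longrightarrow> (E u v \<longleftrightarrow> dist (c u) (c v) \<le> 2)"
    and tf: "\<not> (\<exists>u\<in>V. \<exists>v\<in>V. \<exists>w\<in>V. E u v \<and> E v w \<and> E u w)"
    and irr: "\<forall>u. \<not> E u u" and sym: "\<forall>u v. E u v \<longrightarrow> E v u"
  shows "\<exists>f. (\<forall>u\<in>V. \<forall>v\<in>V. E u v \<longrightarrow> f u \<noteq> f v) \<and> (\<forall>v\<in>V. f v < (4::nat))"
proof -
  have "\<exists>f. (\<forall>u\<in>A. \<forall>v\<in>A. E u v \<longrightarrow> f u \<noteq> f v) \<and> (\<forall>v\<in>A. f v < (4::nat))"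
    if "A \<subseteq> V" for A
    using that
  proof (induction "card A" arbitrary: A rule: less_induct)
    case less
    show ?case
    proof (cases "A = {}")
      case True
      then show ?thesis by auto
    next
      case False
      have finA: "finite A" using less.prems fin finite_subset by blast
      define m where "m = Min ((\<lambda>u. c u $ 1) ` A)"
      have "m \<in> (\<lambda>u. c u $ 1) ` A" unfolding m_def using finA False by (intro Min_in) auto
      then obtain w where w: "w \<in> A" "c w $ 1 = m" by auto
      have wmin: "c w $ 1 \<le> c u $ 1" if "u \<in> A" for u
        using w that finA unfolding m_def by (simp add: Min_le)
      have "card (A - {w}) < card A" by (rule card_Diff1_less[OF finA w(1)])
      then obtain f where f: "\<forall>u\<in>A - {w}. \<forall>v\<in>A - {w}. E u v \<longrightarrow> f u \<noteq> f v"
        "\<forall>v\<in>A - {w}. f v < (4::nat)"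
        using less.hyps[of "A - {w}"] less.prems by blast
      define N where "N = {u\<in>A. u \<noteq> w \<and> E w u}"
      have finN: "finite N" unfolding N_def using finA by simp
      have wV: "w \<in> V" using w less.prems by auto
      have cardN: "card N \<le> 3"
      proof (rule ccontr)
        assume "\<not> card N \<le> 3"
        define g where "g u = bucket (c u - c w)" for u
        have "g ` N \<subseteq> {0,1,2}" unfolding g_def bucket_def by auto
        then have "card (g ` N) \<le> 3" using card_mono[of "{0,1,2::nat}" "g ` N"] by simp
        have "\<not> inj_on g N"
        proof
          assume "inj_on g N"
          then have "card (g ` N) = card N" by (rule card_image)
          then show False using \<open>card (g ` N) \<le> 3\<close> \<open>\<not> card N \<le> 3\<close> by linarith
        qed
        then obtain u v where uv: "u \<in> N" "v \<in> N" "u \<noteq> v" "g u = g v"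
          unfolding inj_on_def by blast
        have uV: "u \<in> V" "u \<in> A" "u \<noteq> w" "E w u" using uv less.prems unfolding N_def by auto
        have vV: "v \<in> V" "v \<in> A" "v \<noteq> w" "E w v" using uv less.prems unfolding N_def by auto
        have "dist (c u - c w) (c v - c w) \<le> 2"
        proof (rule key)
          show "(c u - c w) $ 1 \<ge> 0" "(c v - c w) $ 1 \<ge> 0" using wmin uV vV by auto
          show "c u - c w \<noteq> 0" using inj uV wV unfolding inj_on_def by auto
          show "c v - c w \<noteq> 0" using inj vV wV unfolding inj_on_def by auto
          show "norm (c u - c w) \<le> 2" using adj uV wV by (auto simp: dist_norm norm_minus_commute)
          show "norm (c v - c w) \<le> 2" using adj vV wV by (auto simp: dist_norm norm_minus_commute)
          show "bucket (c u - c w) = bucket (c v - c w)" using uv g_def by simp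
        qed
        then have "E u v" using adj uV vV uv(3) by (simp add: dist_norm)
        then show False using tf uV(2) vV(2) w(1) uV(4) vV(4) less.prems by blast
      qed
      have "card (f ` N) \<le> 3" using cardN card_image_le[OF finN, of f] by linarith
      have "\<exists>k. k < (4::nat) \<and> k \<notin> f ` N"
      proof (rule ccontr)
        assume "\<not> ?thesis"
        then have "{0..<4} \<subseteq> f ` N" by auto
        then have "card {0..<(4::nat)} \<le> card (f ` N)" using finN by (intro card_mono) auto
        then show False using \<open>card (f ` N) \<le> 3\<close> by simp
      qed
      then obtain k where k: "k < 4" "k \<notin> f ` N" by blast
      show ?thesis
      proof (intro exI[of _ "f(w := k)"] conjI ballI impI)
        fix v assume "v \<in> A" then show "(f(w := k)) v < 4" using f k by auto
      next
        fix u v assume uv: "u \<in> A" "v \<in> A" "E u v"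
        show "(f(w := k)) u \<noteq> (f(w := k)) v"
        proof (cases "u = w")
          case True
          then have "v \<noteq> w" using uv irr by auto
          then have "v \<in> N" using uv True unfolding N_def by auto
          then show ?thesis using True k \<open>v \<noteq> w\<close> by auto
        next
          case uw: False
          show ?thesis
          proof (cases "v = w")
            case True
            then have "u \<in> N" using uv uw sym unfolding N_def by auto
            then show ?thesis using True k uw by force
          next
            case False
            then show ?thesis using uw f uv by auto
          qed
        qed
      qed
    qed
  qed
  then show ?thesis by blast
qed

theorem lemma4p1:
  fixes V :: "'a set" and E :: "'a \<Rightarrow> 'a \<Rightarrow> bool"
  assumes "finite V"
    and "simple_graph V E"
    and "unit_disk_graph V E"
    and "triangle_free V E"
  shows "\<exists>f. proper_coloring V E f \<and> (\<forall>v\<in>V. f v < 4)"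
proof -
  obtain c :: "'a \<Rightarrow> real^2" where c: "inj_on c V"
    "\<forall>u\<in>V. \<forall>v\<in>V. u \<noteq> v \<longrightarrow> (E u v \<longleftrightarrow> unit_disk (c u) \<inter> unit_disk (c v) \<noteq> {})"
    using assms(3) unfolding unit_disk_graph_def by blast
  have "\<exists>f. (\<forall>u\<in>V. \<forall>v\<in>V. E u v \<longrightarrow> f u \<noteq> f v) \<and> (\<forall>v\<in>V. f v < (4::nat))"
  proof (rule color[OF assms(1) c(1)])
    show "\<forall>u\<in>V. \<forall>v\<in>V. u \<noteq> v \<longrightarrow> (E u v \<longleftrightarrow> dist (c u) (c v) \<le> 2)"
      using c(2) by (simp add: disk_iff)
    show "\<not> (\<exists>u\<in>V. \<exists>v\<in>V. \<exists>w\<in>V. E u v \<and> E v w \<and> E u w)"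
      using assms(4) unfolding triangle_free_def .
    show "\<forall>u. \<not> E u u" using assms(2) unfolding simple_graph_def by blast
    show "\<forall>u v. E u v \<longrightarrow> E v u" using assms(2) unfolding simple_graph_def by blast
  qed
  then show ?thesis unfolding proper_coloring_def by blast
qed

end
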